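(* Let $d\geq 2$, energies $E_1\leq\dots\leq E_d$, inverse temperatures $\alpha>\beta\geq 0$, and $\gamma_k=e^{-\alpha E_k}/\sum_i e^{-\alpha E_i}$, $\Gamma_k=e^{-\beta E_k}/\sum_i e^{-\beta E_i}$. Define the probability vectors $\tilde{\boldsymbol{\gamma}}$ and $\tilde{\boldsymbol{\Gamma}}$ by $$\tilde{\gamma}_1=\frac{\Gamma_1(\gamma_1-\gamma_d)}{\Gamma_1(1-\gamma_d)-\Gamma_d(1-\gamma_1)},\quad \tilde{\gamma}_k=\frac{1-\tilde{\gamma}_1}{1-\gamma_1}\gamma_k\ (k\neq 1),$$ $$\tilde{\Gamma}_d=\frac{\Gamma_d(\gamma_1-\gamma_d)}{\Gamma_1(1-\gamma_d)-\Gamma_d(1-\gamma_1)},\quad \tilde{\Gamma}_k=\frac{1-\tilde{\Gamma}_d}{1-\Gamma_d}\Gamma_k\ (k\neq d).$$ Then $\tilde{\boldsymbol{\gamma}}\in F_{AB}$ and $\tilde{\boldsymbol{\Gamma}}\in F_{AB}$. Moreover, the convergence to these states with the number of strokes $N$ is exponential: there exist states in $F^{(N)}_{AB}$ whose distance to $\tilde{\boldsymbol{\gamma}}$ (respectively $\tilde{\boldsymbol{\Gamma}}$) decays exponentially in $N$.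
   Context: Incoherent states are probability vectors in $\mathbb{R}^d$. For a full-support probability vector $\mathbf{g}$, $\mathbf{p}\succ_{\mathbf{g}}\mathbf{q}$ (thermomajorisation) means: ordering indices by a permutation $\pi$ with $p_{\pi_i}/g_{\pi_i}$ non-increasing in $i$, the piecewise linear curve through $\left(\sum_{i\leq j}g_{\pi_i},\sum_{i\leq j}p_{\pi_i}\right)$, $j=0,\dots,d$, is nowhere below the analogous curve of $\mathbf{q}$. For $N\geq 1$, $F^{(N)}_{AB}$ (states achievable after $N$ strokes) is the set of convex combinations of vectors $\mathbf{p}^{(N-1)}$ obtainable by a chain $\boldsymbol{\gamma}=\mathbf{p}^{(0)}\succ_{\boldsymbol{\Gamma}}\mathbf{p}^{(1)}\succ_{\boldsymbol{\gamma}}\mathbf{p}^{(2)}\succ_{\boldsymbol{\Gamma}}\cdots\mathbf{p}^{(N-1)}$ or by a chain $\boldsymbol{\Gamma}=\mathbf{p}^{(0)}\succ_{\boldsymbol{\gamma}}\mathbf{p}^{(1)}\succ_{\boldsymbol{\Gamma}}\cdots\mathbf{p}^{(N-1)}$. $F_{AB}$ is the set of states achievable as $N\to\infty$, i.e., the closure of $\bigcup_N F^{(N)}_{AB}$. *)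

theory Defs
  imports "HOL-Combinatorics.Permutations" Complex_Main
begin

text \<open>States on a d-level system are represented as functions nat \<Rightarrow> real,
  where index i < d corresponds to the paper's index i+1 and the function
  vanishes for i \<ge> d.\<close>

definition prob_vec :: "nat \<Rightarrow> (nat \<Rightarrow> real) \<Rightarrow> bool" where
  "prob_vec d p \<longleftrightarrow> (\<forall>i<d. 0 \<le> p i) \<and> (\<forall>i\<ge>d. p i = 0) \<and> (\<Sum>i<d. p i) = 1"

definition full_support :: "nat \<Rightarrow> (nat \<Rightarrow> real) \<Rightarrow> bool" where
  "full_support d g \<longleftrightarrow> prob_vec d g \<and> (\<forall>i<d. 0 < g i)"

definition thermo_order :: "nat \<Rightarrow> (nat \<Rightarrow> real) \<Rightarrow> (nat \<Rightarrow> real) \<Rightarrow> (nat \<Rightarrow> nat) \<Rightarrow> bool" where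
  "thermo_order d g p \<pi> \<longleftrightarrow> \<pi> permutes {..<d} \<and>
     (\<forall>i j. i \<le> j \<longrightarrow> j < d \<longrightarrow> p (\<pi> j) / g (\<pi> j) \<le> p (\<pi> i) / g (\<pi> i))"

definition cumg :: "(nat \<Rightarrow> real) \<Rightarrow> (nat \<Rightarrow> nat) \<Rightarrow> nat \<Rightarrow> real" where
  "cumg g \<pi> j = (\<Sum>i<j. g (\<pi> i))"

text \<open>The piecewise linear curve through the points
  (sum_{i<j} g_{pi i}, sum_{i<j} p_{pi i}), j = 0..d, evaluated at x in [0,1]:
  on the i-th segment [cumg i, cumg (i+1)] of length g_{pi i} it has slope
  p_{pi i}/g_{pi i}, so its value is the sum of slope times the length of the
  part of each segment lying to the left of x.\<close>
definition thermo_curve :: "nat \<Rightarrow> (nat \<Rightarrow> real) \<Rightarrow> (nat \<Rightarrow> real) \<Rightarrow> (nat \<Rightarrow> nat) \<Rightarrow> real \<Rightarrow> real" where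
  "thermo_curve d g p \<pi> x =
     (\<Sum>i<d. (p (\<pi> i) / g (\<pi> i)) * max 0 (min (g (\<pi> i)) (x - cumg g \<pi> i)))"

definition thermomaj :: "nat \<Rightarrow> (nat \<Rightarrow> real) \<Rightarrow> (nat \<Rightarrow> real) \<Rightarrow> (nat \<Rightarrow> real) \<Rightarrow> bool" where
  "thermomaj d g p q \<longleftrightarrow> full_support d g \<and> prob_vec d p \<and> prob_vec d q \<and>
     (\<exists>\<pi>p \<pi>q. thermo_order d g p \<pi>p \<and> thermo_order d g q \<pi>q \<and>
        (\<forall>x\<in>{0..1}. thermo_curve d g q \<pi>q x \<le> thermo_curve d g p \<pi>p x))"

text \<open>End points p^(k) of chains a = p^(0) \<succ>_b p^(1) \<succ>_a p^(2) \<succ>_b ...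
  (step from p^(k) to p^(k+1) uses b for even k and a for odd k).\<close>
fun chain_ends :: "nat \<Rightarrow> (nat \<Rightarrow> real) \<Rightarrow> (nat \<Rightarrow> real) \<Rightarrow> nat \<Rightarrow> (nat \<Rightarrow> real) set" where
  "chain_ends d a b 0 = {a}"
| "chain_ends d a b (Suc k) =
     {q. \<exists>p\<in>chain_ends d a b k. thermomaj d (if even k then b else a) p q}"

definition convex_combs :: "(nat \<Rightarrow> real) set \<Rightarrow> (nat \<Rightarrow> real) set" where
  "convex_combs S = {q. \<exists>(m::nat) (ps :: nat \<Rightarrow> nat \<Rightarrow> real) (w :: nat \<Rightarrow> real).
      (\<forall>j<m. ps j \<in> S \<and> 0 \<le> w j) \<and> (\<Sum>j<m. w j) = 1 \<and>
      q = (\<lambda>i. \<Sum>j<m. w j * ps j i)}"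

text \<open>F^(N)_AB for N \<ge> 1 (gs = small gamma, Gs = capital Gamma).\<close>
definition F_N :: "nat \<Rightarrow> (nat \<Rightarrow> real) \<Rightarrow> (nat \<Rightarrow> real) \<Rightarrow> nat \<Rightarrow> (nat \<Rightarrow> real) set" where
  "F_N d gs Gs N = convex_combs (chain_ends d gs Gs (N - 1) \<union> chain_ends d Gs gs (N - 1))"

text \<open>Distance on states (l1 distance on the d coordinates; all norms on R^d are equivalent).\<close>
definition vdist :: "nat \<Rightarrow> (nat \<Rightarrow> real) \<Rightarrow> (nat \<Rightarrow> real) \<Rightarrow> real" where
  "vdist d p q = (\<Sum>i<d. \<bar>p i - q i\<bar>)"

definition F_AB :: "nat \<Rightarrow> (nat \<Rightarrow> real) \<Rightarrow> (nat \<Rightarrow> real) \<Rightarrow> (nat \<Rightarrow> real) set" where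
  "F_AB d gs Gs = {p. (\<forall>i\<ge>d. p i = 0) \<and>
      (\<forall>\<epsilon>>0. \<exists>N\<ge>1. \<exists>q\<in>F_N d gs Gs N. vdist d p q < \<epsilon>)}"

definition gibbs :: "nat \<Rightarrow> (nat \<Rightarrow> real) \<Rightarrow> real \<Rightarrow> nat \<Rightarrow> real" where
  "gibbs d E b k = (if k < d then exp (- b * E k) / (\<Sum>i<d. exp (- b * E i)) else 0)"

definition tilde_gamma :: "nat \<Rightarrow> (nat \<Rightarrow> real) \<Rightarrow> (nat \<Rightarrow> real) \<Rightarrow> nat \<Rightarrow> real" where
  "tilde_gamma d gs Gs k =
    (let t1 = Gs 0 * (gs 0 - gs (d-1)) / (Gs 0 * (1 - gs (d-1)) - Gs (d-1) * (1 - gs 0))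
     in if k = 0 then t1 else if k < d then (1 - t1) / (1 - gs 0) * gs k else 0)"

definition tilde_Gamma :: "nat \<Rightarrow> (nat \<Rightarrow> real) \<Rightarrow> (nat \<Rightarrow> real) \<Rightarrow> nat \<Rightarrow> real" where
  "tilde_Gamma d gs Gs k =
    (let td = Gs (d-1) * (gs 0 - gs (d-1)) / (Gs 0 * (1 - gs (d-1)) - Gs (d-1) * (1 - gs 0))
     in if k = d - 1 then td else if k < d then (1 - td) / (1 - Gs (d-1)) * Gs k else 0)"

end

theory Submission
  imports Defs
begin


lemma fs_pos: "full_support d g \<Longrightarrow> i < d \<Longrightarrow> 0 < g i"
  by (simp add: full_support_def)

lemma perm_lt: "\<pi> permutes {..<d} \<Longrightarrow> i < d \<Longrightarrow> \<pi> i < d"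
  using permutes_in_image by fastforce

lemma cumg_Suc: "cumg g \<pi> (Suc i) = cumg g \<pi> i + g (\<pi> i)"
  by (simp add: cumg_def)

lemma cumg_mono:
  assumes "full_support d g" "\<pi> permutes {..<d}" "i \<le> j" "j \<le> d"
  shows "cumg g \<pi> i \<le> cumg g \<pi> j"
  unfolding cumg_def
proof (rule sum_mono2)
  fix b assume "b \<in> {..<j} - {..<i}"
  then have "b < d" using assms by auto
  then show "0 \<le> g (\<pi> b)"
    using assms fs_pos perm_lt less_imp_le by blast
qed (use assms in auto)

lemma cumg_d:
  assumes "full_support d g" "\<pi> permutes {..<d}"
  shows "cumg g \<pi> d = 1"
proof -
  have "(\<Sum>i<d. g i) = (\<Sum>i<d. (g \<circ> \<pi>) i)"
    by (rule sum.permute[OF assms(2)])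
  then show ?thesis using assms(1) by (simp add: cumg_def full_support_def prob_vec_def)
qed

definition cl :: "(nat \<Rightarrow> real) \<Rightarrow> (nat \<Rightarrow> nat) \<Rightarrow> nat \<Rightarrow> real \<Rightarrow> real" where
  "cl g \<pi> i x = max 0 (min (g (\<pi> i)) (x - cumg g \<pi> i))"

lemma cl_eq:
  assumes "0 \<le> g (\<pi> i)"
  shows "cl g \<pi> i x = min x (cumg g \<pi> (Suc i)) - min x (cumg g \<pi> i)"
  using assms unfolding cl_def cumg_Suc by (auto simp: min_def max_def)

lemma sum_cl:
  assumes "full_support d g" "\<pi> permutes {..<d}" "0 \<le> x" "x \<le> 1"
  shows "(\<Sum>i<d. cl g \<pi> i x) = x"
proof -
  have "(\<Sum>i<d. cl g \<pi> i x) = (\<Sum>i<d. min x (cumg g \<pi> (Suc i)) - min x (cumg g \<pi> i))"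
  proof (rule sum.cong)
    fix i assume "i \<in> {..<d}"
    then have "0 \<le> g (\<pi> i)" using assms fs_pos perm_lt less_imp_le by blast
    then show "cl g \<pi> i x = min x (cumg g \<pi> (Suc i)) - min x (cumg g \<pi> i)" by (rule cl_eq)
  qed simp
  also have "\<dots> = min x (cumg g \<pi> d) - min x (cumg g \<pi> 0)"
    by (rule sum_lessThan_telescope)
  finally show ?thesis using cumg_d[OF assms(1,2)] assms by (simp add: cumg_def)
qed

lemma curve_cl: "thermo_curve d g p \<pi> x = (\<Sum>i<d. p (\<pi> i) / g (\<pi> i) * cl g \<pi> i x)"
  by (simp add: thermo_curve_def cl_def)

lemma curve_le_line:
  assumes ord: "thermo_order d g p \<pi>" and fs: "full_support d g" and j: "j < d"
    and x: "0 \<le> x" "x \<le> 1"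
  shows "thermo_curve d g p \<pi> x \<le> (\<Sum>i<j. p (\<pi> i)) + p (\<pi> j) / g (\<pi> j) * (x - cumg g \<pi> j)"
proof -
  have perm: "\<pi> permutes {..<d}" and mon: "\<And>i j. i \<le> j \<Longrightarrow> j < d \<Longrightarrow> p (\<pi> j) / g (\<pi> j) \<le> p (\<pi> i) / g (\<pi> i)"
    using ord by (auto simp: thermo_order_def)
  define r where "r i = p (\<pi> i) / g (\<pi> i)" for i
  define c where "c i = cl g \<pi> i x" for i
  define h where "h i = (if i < j then g (\<pi> i) else 0)" for i
  have gp: "\<And>i. i < d \<Longrightarrow> 0 < g (\<pi> i)" using fs_pos[OF fs] perm_lt[OF perm] by blast
  have sj: "{..<j} \<subseteq> {..<d}" using j by auto
  have P: "(\<Sum>i<j. p (\<pi> i)) = (\<Sum>i<d. r i * h i)"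
  proof -
    have "(\<Sum>i<j. p (\<pi> i)) = (\<Sum>i<j. r i * g (\<pi> i))"
    proof (rule sum.cong)
      fix i assume "i \<in> {..<j}"
      then have "0 < g (\<pi> i)" using gp j by simp
      then show "p (\<pi> i) = r i * g (\<pi> i)" by (simp add: r_def)
    qed simp
    also have "\<dots> = (\<Sum>i<d. r i * h i)"
      by (rule sum.mono_neutral_cong_left) (use sj in \<open>auto simp: h_def\<close>)
    finally show ?thesis .
  qed
  have Cj: "cumg g \<pi> j = (\<Sum>i<d. h i)"
    unfolding cumg_def h_def by (rule sum.mono_neutral_cong_left) (use sj in auto)
  have X: "x = (\<Sum>i<d. c i)" using sum_cl[OF fs perm x] by (simp add: c_def)
  have L: "thermo_curve d g p \<pi> x = (\<Sum>i<d. r i * c i)" by (simp add: curve_cl r_def c_def)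
  have "(\<Sum>i<d. r i * h i) + r j * (x - cumg g \<pi> j) - (\<Sum>i<d. r i * c i)
      = (\<Sum>i<d. (r i - r j) * (h i - c i))"
    unfolding X Cj by (simp add: sum_subtractf[symmetric] sum_distrib_left algebra_simps sum.distrib[symmetric])
  also have "\<dots> \<ge> 0"
  proof (rule sum_nonneg)
    fix i assume i: "i \<in> {..<d}"
    have gi: "0 < g (\<pi> i)" using gp i by simp
    have c0: "0 \<le> c i" "c i \<le> g (\<pi> i)" using gi by (auto simp: c_def cl_def)
    show "0 \<le> (r i - r j) * (h i - c i)"
    proof (cases "i < j")
      case True
      then have "r j \<le> r i" using mon j unfolding r_def by auto
      then show ?thesis using True c0 by (simp add: h_def)
    next
      case False
      then have "r i \<le> r j" using mon i unfolding r_def by auto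
      then show ?thesis using False c0 by (simp add: h_def mult_nonpos_nonneg)
    qed
  qed
  finally show ?thesis using P L by (simp add: r_def)
qed

lemma curve_eq_line:
  assumes ord: "thermo_order d g p \<pi>" and fs: "full_support d g" and j: "j < d"
    and x: "cumg g \<pi> j \<le> x" "x \<le> cumg g \<pi> (Suc j)"
  shows "thermo_curve d g p \<pi> x = (\<Sum>i<j. p (\<pi> i)) + p (\<pi> j) / g (\<pi> j) * (x - cumg g \<pi> j)"
proof -
  have perm: "\<pi> permutes {..<d}"
    using ord by (auto simp: thermo_order_def)
  have x01: "0 \<le> x" "x \<le> 1"
    using cumg_mono[OF fs perm, of 0 j] cumg_mono[OF fs perm, of "Suc j" d] cumg_d[OF fs perm] x j
    by (auto simp: cumg_def)
  define r where "r i = p (\<pi> i) / g (\<pi> i)" for i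
  define c where "c i = cl g \<pi> i x" for i
  define h where "h i = (if i < j then g (\<pi> i) else 0)" for i
  have gp: "\<And>i. i < d \<Longrightarrow> 0 < g (\<pi> i)" using fs_pos[OF fs] perm_lt[OF perm] by blast
  have sj: "{..<j} \<subseteq> {..<d}" using j by auto
  have P: "(\<Sum>i<j. p (\<pi> i)) = (\<Sum>i<d. r i * h i)"
  proof -
    have "(\<Sum>i<j. p (\<pi> i)) = (\<Sum>i<j. r i * g (\<pi> i))"
    proof (rule sum.cong)
      fix i assume "i \<in> {..<j}"
      then have "0 < g (\<pi> i)" using gp j by simp
      then show "p (\<pi> i) = r i * g (\<pi> i)" by (simp add: r_def)
    qed simp
    also have "\<dots> = (\<Sum>i<d. r i * h i)"
      by (rule sum.mono_neutral_cong_left) (use sj in \<open>auto simp: h_def\<close>)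
    finally show ?thesis .
  qed
  have Cj: "cumg g \<pi> j = (\<Sum>i<d. h i)"
    unfolding cumg_def h_def by (rule sum.mono_neutral_cong_left) (use sj in auto)
  have X: "x = (\<Sum>i<d. c i)" using sum_cl[OF fs perm x01] by (simp add: c_def)
  have L: "thermo_curve d g p \<pi> x = (\<Sum>i<d. r i * c i)" by (simp add: curve_cl r_def c_def)
  have "(\<Sum>i<d. r i * h i) + r j * (x - cumg g \<pi> j) - (\<Sum>i<d. r i * c i)
      = (\<Sum>i<d. (r i - r j) * (h i - c i))"
    unfolding X Cj by (simp add: sum_subtractf[symmetric] sum_distrib_left algebra_simps sum.distrib[symmetric])
  also have "\<dots> = 0"
  proof (rule sum.neutral, rule ballI)
    fix i assume i: "i \<in> {..<d}"
    have gi: "0 < g (\<pi> i)" using gp i by simp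
    show "(r i - r j) * (h i - c i) = 0"
    proof (cases "i < j")
      case True
      have "cumg g \<pi> (Suc i) \<le> cumg g \<pi> j" using cumg_mono[OF fs perm, of "Suc i" j] True j by simp
      then have "c i = g (\<pi> i)" using x gi by (auto simp: c_def cl_def cumg_Suc)
      then show ?thesis using True by (simp add: h_def)
    next
      case False
      show ?thesis
      proof (cases "i = j")
        case False
        with \<open>\<not> i < j\<close> have "Suc j \<le> i" by simp
        then have "cumg g \<pi> (Suc j) \<le> cumg g \<pi> i" using cumg_mono[OF fs perm, of "Suc j" i] i by simp
        then have "c i = 0" using x gi by (auto simp: c_def cl_def)
        then show ?thesis using \<open>\<not> i < j\<close> by (simp add: h_def)
      qed simp
    qed
  qed
  finally show ?thesis using P L by (simp add: r_def)
qed

lemma piece_exists: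
  assumes fs: "full_support d g" and perm: "\<pi> permutes {..<d}" and x: "0 \<le> x" "x \<le> 1" and d: "0 < d"
  shows "\<exists>j<d. cumg g \<pi> j \<le> x \<and> x \<le> cumg g \<pi> (Suc j)"
proof -
  have "\<And>n. 0 < n \<Longrightarrow> n \<le> d \<Longrightarrow> x \<le> cumg g \<pi> n \<Longrightarrow> \<exists>j<n. cumg g \<pi> j \<le> x \<and> x \<le> cumg g \<pi> (Suc j)"
  proof -
    fix n show "0 < n \<Longrightarrow> n \<le> d \<Longrightarrow> x \<le> cumg g \<pi> n \<Longrightarrow> \<exists>j<n. cumg g \<pi> j \<le> x \<and> x \<le> cumg g \<pi> (Suc j)"
    proof (induction n)
      case (Suc m)
      show ?case
      proof (cases "0 < m \<and> x \<le> cumg g \<pi> m")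
        case True
        then obtain j where "j < m" "cumg g \<pi> j \<le> x \<and> x \<le> cumg g \<pi> (Suc j)" using Suc by auto
        then show ?thesis by (intro exI[of _ j]) auto
      next
        case False
        then have "cumg g \<pi> m \<le> x" using x by (cases "m = 0") (auto simp: cumg_def)
        then show ?thesis using Suc.prems by (intro exI[of _ m]) auto
      qed
    qed simp
  qed
  from this[of d] show ?thesis using d x cumg_d[OF fs perm] by simp
qed

lemma curve_concave:
  assumes ord: "thermo_order d g p \<pi>" and fs: "full_support d g" and d: "0 < d"
    and xyz: "0 \<le> x" "x \<le> y" "y \<le> z" "z \<le> 1"
  shows "(z - y) * thermo_curve d g p \<pi> x + (y - x) * thermo_curve d g p \<pi> z
           \<le> (z - x) * thermo_curve d g p \<pi> y"
proof -
  have perm: "\<pi> permutes {..<d}"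
    using ord by (auto simp: thermo_order_def)
  obtain j where j: "j < d" "cumg g \<pi> j \<le> y" "y \<le> cumg g \<pi> (Suc j)"
    using piece_exists[OF fs perm _ _ d, of y] xyz by auto
  define l where "l t = (\<Sum>i<j. p (\<pi> i)) + p (\<pi> j) / g (\<pi> j) * (t - cumg g \<pi> j)" for t
  have ey: "thermo_curve d g p \<pi> y = l y" unfolding l_def by (rule curve_eq_line[OF ord fs j])
  have lx: "thermo_curve d g p \<pi> x \<le> l x" unfolding l_def by (rule curve_le_line[OF ord fs j(1)]) (use xyz in auto)
  have lz: "thermo_curve d g p \<pi> z \<le> l z" unfolding l_def by (rule curve_le_line[OF ord fs j(1)]) (use xyz in auto)
  have aff: "(z - y) * l x + (y - x) * l z = (z - x) * l y" unfolding l_def by (simp add: algebra_simps add_divide_distrib[symmetric])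
  have "(z - y) * thermo_curve d g p \<pi> x \<le> (z - y) * l x" using lx xyz by (intro mult_left_mono) auto
  moreover have "(y - x) * thermo_curve d g p \<pi> z \<le> (y - x) * l z" using lz xyz by (intro mult_left_mono) auto
  ultimately show ?thesis unfolding ey aff[symmetric] by linarith
qed

lemma curve_at_cumg:
  assumes ord: "thermo_order d g p \<pi>" and fs: "full_support d g" and k: "k \<le> d" "0 < d"
  shows "thermo_curve d g p \<pi> (cumg g \<pi> k) = (\<Sum>i<k. p (\<pi> i))"
proof (cases "k < d")
  case True
  have "cumg g \<pi> k \<le> cumg g \<pi> (Suc k)" by (simp add: cumg_Suc) (metis True fs fs_pos less_imp_le ord perm_lt thermo_order_def)
  then show ?thesis using curve_eq_line[OF ord fs True] by simp
next
  case False
  then have kd: "k = Suc (d - 1)" using k by simp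
  have perm: "\<pi> permutes {..<d}" using ord by (auto simp: thermo_order_def)
  have gp: "0 < g (\<pi> (d - 1))" using fs_pos[OF fs] perm_lt[OF perm] k by simp
  have "cumg g \<pi> (d - 1) \<le> cumg g \<pi> k" by (simp add: kd cumg_Suc) (use gp in simp)
  then have "thermo_curve d g p \<pi> (cumg g \<pi> k) = (\<Sum>i<d - 1. p (\<pi> i)) + p (\<pi> (d - 1)) / g (\<pi> (d - 1)) * (cumg g \<pi> k - cumg g \<pi> (d - 1))"
    using curve_eq_line[OF ord fs, of "d - 1"] k kd by simp
  also have "\<dots> = (\<Sum>i<k. p (\<pi> i))" using gp by (simp add: kd cumg_Suc)
  finally show ?thesis .
qed

lemma sum_perm_eq:
  assumes "\<pi> permutes {..<d}" shows "(\<Sum>i<d. p (\<pi> i)) = (\<Sum>i<d. p i)"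
  using sum.permute[OF assms, of p] by simp

lemma step_lemma:
  assumes op: "thermo_order d g p \<pi>p" and oq: "thermo_order d g q \<pi>q" and fs: "full_support d g"
    and pp: "prob_vec d p" and pq: "prob_vec d q" and d2: "2 \<le> d"
    and s: "0 < s" "s \<le> g (\<pi>p 0)" "s < 1"
    and h1: "q (\<pi>q 0) / g (\<pi>q 0) \<le> p (\<pi>p 0) / g (\<pi>p 0)"
    and h2: "q (\<pi>q 0) + q (\<pi>q 1) / g (\<pi>q 1) * (s - g (\<pi>q 0)) \<le> s * (p (\<pi>p 0) / g (\<pi>p 0))"
    and h3: "q (\<pi>q 0) + q (\<pi>q 1) / g (\<pi>q 1) * (1 - g (\<pi>q 0)) \<le> 1"
  shows "thermomaj d g p q"
proof -
  have permp: "\<pi>p permutes {..<d}" using op by (auto simp: thermo_order_def)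
  have permq: "\<pi>q permutes {..<d}" using oq by (auto simp: thermo_order_def)
  have d0: "0 < d" using d2 by simp
  define u where "u = g (\<pi>p 0)"
  define v where "v = p (\<pi>p 0)"
  define cp where "cp = thermo_curve d g p \<pi>p"
  define cq where "cq = thermo_curve d g q \<pi>q"
  have u0: "0 < u" unfolding u_def using fs_pos[OF fs] perm_lt[OF permp] d0 by blast
  have cp0: "cp 0 = 0" using curve_at_cumg[OF op fs, of 0] d0 by (simp add: cp_def cumg_def)
  have cpu: "cp u = v" using curve_at_cumg[OF op fs, of 1] d2 by (simp add: cp_def cumg_def u_def v_def)
  have cp1: "cp 1 = 1" using curve_at_cumg[OF op fs, of d] d0 cumg_d[OF fs permp] sum_perm_eq[OF permp, of p] pp
    by (simp add: cp_def prob_vec_def)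
  have u1: "u \<le> 1" using cumg_mono[OF fs permp, of 1 d] cumg_d[OF fs permp] d0 by (simp add: cumg_def u_def)
  have q0: "\<And>x. 0 \<le> x \<Longrightarrow> x \<le> 1 \<Longrightarrow> cq x \<le> q (\<pi>q 0) / g (\<pi>q 0) * x"
    using curve_le_line[OF oq fs d0] by (simp add: cq_def cumg_def)
  define l1 where "l1 x = q (\<pi>q 0) + q (\<pi>q 1) / g (\<pi>q 1) * (x - g (\<pi>q 0))" for x
  have q1: "\<And>x. 0 \<le> x \<Longrightarrow> x \<le> 1 \<Longrightarrow> cq x \<le> l1 x"
    using curve_le_line[OF oq fs, of 1] d2 by (simp add: cq_def cumg_def l1_def)
  have lowp: "\<And>x. 0 \<le> x \<Longrightarrow> x \<le> u \<Longrightarrow> x * (v / u) \<le> cp x"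
  proof -
    fix x assume x: "0 \<le> x" "x \<le> u"
    have "(u - x) * cp 0 + (x - 0) * cp u \<le> (u - 0) * cp x"
      unfolding cp_def by (rule curve_concave[OF op fs d0]) (use x u1 in auto)
    then have "x * v \<le> u * cp x" using cp0 cpu by simp
    then show "x * (v / u) \<le> cp x" using u0 by (simp add: field_simps)
  qed
  have "\<forall>x\<in>{0..1}. cq x \<le> cp x"
  proof
    fix x :: real assume "x \<in> {0..1}"
    then have x: "0 \<le> x" "x \<le> 1" by auto
    show "cq x \<le> cp x"
    proof (cases "x \<le> s")
      case True
      have "cq x \<le> q (\<pi>q 0) / g (\<pi>q 0) * x" using q0 x by simp
      also have "\<dots> \<le> x * (v / u)" using mult_left_mono[OF h1 x(1)] by (simp add: u_def v_def mult.commute)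
      also have "\<dots> \<le> cp x" using lowp x True s by (simp add: u_def)
      finally show ?thesis .
    next
      case False
      have c1: "(1 - x) * cp s + (x - s) * cp 1 \<le> (1 - s) * cp x"
        unfolding cp_def by (rule curve_concave[OF op fs d0]) (use x False s in auto)
      have cs: "s * (v / u) \<le> cp s" using lowp s by (simp add: u_def)
      have aff: "(1 - s) * l1 x = (1 - x) * l1 s + (x - s) * l1 1"
        unfolding l1_def by (simp add: algebra_simps add_divide_distrib[symmetric])
      have "l1 s \<le> cp s" using h2 cs by (simp add: l1_def u_def v_def)
      then have A: "(1 - x) * l1 s \<le> (1 - x) * cp s" using x by (intro mult_left_mono) auto
      have B: "(x - s) * l1 1 \<le> (x - s) * cp 1" using h3 cp1 False by (intro mult_left_mono) (auto simp: l1_def)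
      have "(1 - s) * l1 x \<le> (1 - s) * cp x" using A B c1 aff by linarith
      then have "l1 x \<le> cp x" using s by simp
      then show ?thesis using q1 x by (meson order_trans)
    qed
  qed
  then show ?thesis unfolding thermomaj_def using fs pp pq op oq by (auto simp: cp_def cq_def)
qed



lemma gibbs_fs:
  assumes "0 < d" shows "full_support d (gibbs d E b)"
proof -
  define Z where "Z = (\<Sum>i<d. exp (- b * E i))"
  have Z: "0 < Z" unfolding Z_def using assms by (intro sum_pos) auto
  have "(\<Sum>i<d. gibbs d E b i) = (\<Sum>i<d. exp (- b * E i) / Z)"
    by (simp add: gibbs_def Z_def)
  also have "\<dots> = 1" using Z by (simp add: sum_divide_distrib[symmetric] Z_def)
  finally show ?thesis using Z
    by (auto simp: full_support_def prob_vec_def gibbs_def Z_def)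
qed

definition aS :: "nat \<Rightarrow> (nat \<Rightarrow> real) \<Rightarrow> real \<Rightarrow> nat \<Rightarrow> real" where
  "aS d g t k = (if k = 0 then t else if k < d then (1 - t) / (1 - g 0) * g k else 0)"

definition bS :: "nat \<Rightarrow> (nat \<Rightarrow> real) \<Rightarrow> real \<Rightarrow> nat \<Rightarrow> real" where
  "bS d G T k = (if k = d - 1 then T else if k < d then (1 - T) / (1 - G (d - 1)) * G k else 0)"

definition revp :: "nat \<Rightarrow> nat \<Rightarrow> nat" where
  "revp d k = (if k < d then d - 1 - k else k)"

lemma revp_perm: "revp d permutes {..<d}"
proof (rule bij_imp_permutes)
  have "inj_on (revp d) {..<d}" by (rule inj_onI) (auto simp: revp_def)
  moreover have "revp d ` {..<d} = {..<d}"
  proof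
    show "revp d ` {..<d} \<subseteq> {..<d}" by (auto simp: revp_def)
    show "{..<d} \<subseteq> revp d ` {..<d}"
    proof
      fix k assume k: "k \<in> {..<d}"
      then have "revp d (revp d k) = k" "revp d k \<in> {..<d}" by (auto simp: revp_def)
      then show "k \<in> revp d ` {..<d}" by (metis imageI)
    qed
  qed
  ultimately show "bij_betw (revp d) {..<d} {..<d}" by (simp add: bij_betw_def)
qed (auto simp: revp_def)

lemma abs_p1: "0 \<le> (b::real) \<Longrightarrow> \<bar>b * c\<bar> = b * \<bar>c\<bar>"
  by (simp add: abs_mult)

lemma abs_p2: "0 \<le> (a::real) \<Longrightarrow> 0 \<le> b \<Longrightarrow> \<bar>a * (b * c)\<bar> = a * (b * \<bar>c\<bar>)"
  by (simp add: abs_mult)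

lemma le2: "(a::real) \<le> 1 \<Longrightarrow> 0 \<le> X \<Longrightarrow> 2 * (a * X) \<le> 2 * X"
  using mult_right_mono[of a 1 X] by simp

lemma expo:
  fixes rho K :: real and S :: "nat \<Rightarrow> 'a set" and v :: "'a \<Rightarrow> real"
  assumes rho: "0 < rho" "rho < 1" and K: "0 \<le> K"
    and H: "\<forall>n. \<exists>q\<in>S (Suc n). v q \<le> K * rho ^ (n div 2)"
  shows "\<exists>C r. 0 < r \<and> r < 1 \<and> (\<forall>N\<ge>1. \<exists>q\<in>S N. v q \<le> C * r ^ N)"
proof (intro exI conjI allI impI)
  define r where "r = sqrt rho"
  show r0: "0 < r" using rho by (simp add: r_def)
  show r1: "r < 1" using rho by (simp add: r_def)
  have r2: "r ^ 2 = rho" using rho by (simp add: r_def)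
  fix N :: nat assume N: "1 \<le> N"
  define n where "n = N - 1"
  define m where "m = n div 2"
  have Nn: "N = Suc n" using N by (simp add: n_def)
  obtain q where q: "q \<in> S N" "v q \<le> K * rho ^ m" using H Nn m_def by blast
  have "N \<le> 2 * (m + 1)" using Nn m_def by simp
  then have "r ^ (2 * (m + 1)) \<le> r ^ N" using r0 r1 by (intro power_decreasing) auto
  moreover have "r ^ (2 * (m + 1)) = rho ^ (m + 1)" by (metis power_mult r2)
  ultimately have "rho ^ (m + 1) \<le> r ^ N" by simp
  then have "K / rho * rho ^ (m + 1) \<le> K / rho * r ^ N" using K rho by (intro mult_left_mono) auto
  moreover have "K / rho * rho ^ (m + 1) = K * rho ^ m" using rho by simp
  ultimately have "v q \<le> K / rho * r ^ N" using q by linarith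
  then show "\<exists>q\<in>S N. v q \<le> K / rho * r ^ N" using q by blast
qed

lemma closure_from_expo:
  fixes S :: "nat \<Rightarrow> 'a set" and v :: "'a \<Rightarrow> real"
  assumes "\<exists>C r. 0 < r \<and> r < 1 \<and> (\<forall>N\<ge>1. \<exists>q\<in>S N. v q \<le> C * r ^ N)"
  shows "\<forall>\<epsilon>>0. \<exists>N\<ge>1. \<exists>q\<in>S N. v q < \<epsilon>"
proof (intro allI impI)
  fix \<epsilon> :: real assume e: "\<epsilon> > 0"
  obtain C r where Cr: "0 < r" "r < 1" "\<forall>N\<ge>1. \<exists>q\<in>S N. v q \<le> C * r ^ N" using assms by blast
  obtain n where n: "r ^ n < \<epsilon> / (\<bar>C\<bar> + 1)" using real_arch_pow_inv[of "\<epsilon> / (\<bar>C\<bar> + 1)" r] e Cr by auto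
  obtain q where q: "q \<in> S (Suc n)" "v q \<le> C * r ^ Suc n" using Cr(3)[rule_format, of "Suc n"] by auto
  have "r ^ Suc n \<le> r ^ n" using Cr by (intro power_decreasing) auto
  have "C * r ^ Suc n \<le> \<bar>C\<bar> * r ^ Suc n" using Cr by (intro mult_right_mono) auto
  also have "\<dots> \<le> (\<bar>C\<bar> + 1) * r ^ n" using \<open>r ^ Suc n \<le> r ^ n\<close> Cr by (intro mult_mono) auto
  also have "\<dots> < \<epsilon>" using n by (simp add: field_simps)
  finally have "v q < \<epsilon>" using q by linarith
  then show "\<exists>N\<ge>1. \<exists>q\<in>S N. v q < \<epsilon>" using q by (intro exI[of _ "Suc n"]) auto
qed

lemma in_convex_combs: "p \<in> S \<Longrightarrow> p \<in> convex_combs S"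
  unfolding convex_combs_def
  by (rule CollectI, rule exI[of _ 1], rule exI[of _ "\<lambda>_. p"], rule exI[of _ "\<lambda>_. 1"]) simp

lemma vdist_sym: "vdist d p q = vdist d q p"
  unfolding vdist_def by (simp add: abs_minus_commute)

lemma iter_contr:
  fixes f :: "real \<Rightarrow> real"
  assumes "\<And>y. f y - c = r * (y - c)"
  shows "(f ^^ m) x - c = r ^ m * (x - c)"
proof (induction m)
  case (Suc m)
  have "(f ^^ Suc m) x - c = r * ((f ^^ m) x - c)" using assms by simp
  then show ?case using Suc by simp
qed simp

lemma alg_phi: "(G1::real) \<noteq> 0 \<Longrightarrow> G1 * X / D * Gd / G1 = Gd * X / D"
  by (simp add: field_simps)

lemma alg_psi:
  fixes G1 Gd g1 gd :: real
  assumes "G1 * (1 - gd) - Gd * (1 - g1) \<noteq> 0" "1 - gd \<noteq> 0"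
  shows "1 - (1 - Gd * (g1 - gd) / (G1 * (1 - gd) - Gd * (1 - g1))) * ((1 - g1) / (1 - gd))
         = G1 * (g1 - gd) / (G1 * (1 - gd) - Gd * (1 - g1))"
proof -
  define D where "D = G1 * (1 - gd) - Gd * (1 - g1)"
  have D: "D \<noteq> 0" using assms by (simp add: D_def)
  have e1: "1 - Gd * (g1 - gd) / D = (G1 - Gd) * (1 - gd) / D"
    using D by (simp add: field_simps D_def)
  have e2: "(G1 - Gd) * (1 - gd) / D * ((1 - g1) / (1 - gd)) = (G1 - Gd) * (1 - g1) / D"
    using assms(2) by simp
  have e3: "1 - (G1 - Gd) * (1 - g1) / D = G1 * (g1 - gd) / D"
    using D by (simp add: field_simps D_def)
  show ?thesis unfolding D_def[symmetric] e1 e2 e3 ..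
qed

lemma alg_psi_diff: "(1::real) - (1 - a) * k - (1 - (1 - b) * k) = k * (a - b)"
  by (simp add: algebra_simps)

lemma alg_phi_diff: "(a::real) * Gd / G1 - b * Gd / G1 = Gd / G1 * (a - b)"
  by (simp add: algebra_simps diff_divide_distrib)

locale P4 =
  fixes d :: nat and E :: "nat \<Rightarrow> real" and \<alpha> \<beta> :: real
  assumes d2: "d \<ge> 2"
    and Emono: "\<forall>i j. i \<le> j \<longrightarrow> j < d \<longrightarrow> E i \<le> E j"
    and Elt: "E 0 < E (d - 1)"
    and ab: "\<alpha> > \<beta>" and b0: "\<beta> \<ge> 0"
begin

abbreviation "gs \<equiv> gibbs d E \<alpha>"
abbreviation "Gs \<equiv> gibbs d E \<beta>"

lemma d0: "0 < d" using d2 by simp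

lemma fs_g: "full_support d gs" by (rule gibbs_fs[OF d0])
lemma fs_G: "full_support d Gs" by (rule gibbs_fs[OF d0])

lemma gpos: "i < d \<Longrightarrow> 0 < gs i" using fs_g by (simp add: full_support_def)
lemma Gpos: "i < d \<Longrightarrow> 0 < Gs i" using fs_G by (simp add: full_support_def)
lemma gsum: "(\<Sum>i<d. gs i) = 1" using fs_g by (simp add: full_support_def prob_vec_def)
lemma Gsum: "(\<Sum>i<d. Gs i) = 1" using fs_G by (simp add: full_support_def prob_vec_def)

lemma cross_gen:
  assumes "i < d" "j < d" "(\<alpha> - \<beta>) * (E i - E j) \<le> 0"
  shows "gs j * Gs i \<le> gs i * Gs j"
proof -
  define Za where "Za = (\<Sum>i<d. exp (- \<alpha> * E i))"
  define Zb where "Zb = (\<Sum>i<d. exp (- \<beta> * E i))"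
  have Za: "0 < Za" unfolding Za_def using d0 by (intro sum_pos) auto
  have Zb: "0 < Zb" unfolding Zb_def using d0 by (intro sum_pos) auto
  have "- \<alpha> * E j + - \<beta> * E i \<le> - \<alpha> * E i + - \<beta> * E j" using assms(3) by (simp add: algebra_simps)
  then have "exp (- \<alpha> * E j) * exp (- \<beta> * E i) \<le> exp (- \<alpha> * E i) * exp (- \<beta> * E j)"
    by (simp add: exp_add[symmetric])
  then have "exp (- \<alpha> * E j) * exp (- \<beta> * E i) / (Za * Zb) \<le> exp (- \<alpha> * E i) * exp (- \<beta> * E j) / (Za * Zb)"
    using Za Zb by (intro divide_right_mono) auto
  then show ?thesis using assms by (simp add: gibbs_def Za_def Zb_def)
qed

lemma cross: "i \<le> j \<Longrightarrow> j < d \<Longrightarrow> gs j * Gs i \<le> gs i * Gs j"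
  using Emono ab by (intro cross_gen) (auto intro!: mult_nonneg_nonpos)

lemma cross_strict: "gs (d - 1) * Gs 0 < gs 0 * Gs (d - 1)"
proof -
  define Za where "Za = (\<Sum>i<d. exp (- \<alpha> * E i))"
  define Zb where "Zb = (\<Sum>i<d. exp (- \<beta> * E i))"
  have Za: "0 < Za" unfolding Za_def using d0 by (intro sum_pos) auto
  have Zb: "0 < Zb" unfolding Zb_def using d0 by (intro sum_pos) auto
  have "(\<alpha> - \<beta>) * (E 0 - E (d - 1)) < 0" using ab Elt by (intro mult_pos_neg) auto
  then have "- \<alpha> * E (d - 1) + - \<beta> * E 0 < - \<alpha> * E 0 + - \<beta> * E (d - 1)" by (simp add: algebra_simps)
  then have "exp (- \<alpha> * E (d - 1)) * exp (- \<beta> * E 0) < exp (- \<alpha> * E 0) * exp (- \<beta> * E (d - 1))"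
    by (simp add: exp_add[symmetric])
  then have "exp (- \<alpha> * E (d - 1)) * exp (- \<beta> * E 0) / (Za * Zb) < exp (- \<alpha> * E 0) * exp (- \<beta> * E (d - 1)) / (Za * Zb)"
    using Za Zb by (intro divide_strict_right_mono) auto
  then show ?thesis using d0 by (simp add: gibbs_def Za_def Zb_def)
qed

lemma ratio_g: "i \<le> j \<Longrightarrow> j < d \<Longrightarrow> gs j / Gs j \<le> gs i / Gs i"
  using cross[of i j] Gpos[of i] Gpos[of j] by (simp add: divide_simps mult.commute)
lemma ratio_G: "i \<le> j \<Longrightarrow> j < d \<Longrightarrow> Gs i / gs i \<le> Gs j / gs j"
  using cross[of i j] gpos[of i] gpos[of j] by (simp add: divide_simps mult.commute)

lemma G1_le_g1: "Gs 0 \<le> gs 0"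
proof -
  have "(\<Sum>j<d. gs j * Gs 0) \<le> (\<Sum>j<d. gs 0 * Gs j)" by (intro sum_mono cross) auto
  then show ?thesis by (simp add: sum_distrib_left[symmetric] sum_distrib_right[symmetric] gsum Gsum)
qed

lemma gd_le_Gd: "gs (d - 1) \<le> Gs (d - 1)"
proof -
  have "(\<Sum>i<d. gs (d - 1) * Gs i) \<le> (\<Sum>i<d. gs i * Gs (d - 1))" using d0 by (intro sum_mono cross) auto
  then show ?thesis by (simp add: sum_distrib_left[symmetric] sum_distrib_right[symmetric] gsum Gsum)
qed

lemma gd_lt_g1: "gs (d - 1) < gs 0"
proof -
  have "exp (- \<alpha> * E (d - 1)) < exp (- \<alpha> * E 0)" using ab b0 Elt by simp
  moreover have "0 < (\<Sum>i<d. exp (- \<alpha> * E i))" using d0 by (intro sum_pos) auto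
  ultimately show ?thesis using d0 by (simp add: gibbs_def divide_strict_right_mono)
qed

lemma Gd_le_G1: "Gs (d - 1) \<le> Gs 0"
proof -
  have "exp (- \<beta> * E (d - 1)) \<le> exp (- \<beta> * E 0)" using b0 Elt by (simp add: mult_left_mono)
  moreover have "0 < (\<Sum>i<d. exp (- \<beta> * E i))" using d0 by (intro sum_pos) auto
  ultimately show ?thesis using d0 by (simp add: gibbs_def divide_right_mono)
qed

lemma two_le:
  assumes "full_support d g" shows "g 0 + g (d - 1) \<le> 1"
proof -
  have "(\<Sum>i\<in>{0, d - 1}. g i) \<le> (\<Sum>i<d. g i)"
    using assms d0 by (intro sum_mono2) (auto simp: full_support_def prob_vec_def)
  then show ?thesis using assms d2 by (simp add: full_support_def prob_vec_def)
qed

lemma g1_lt1: "gs 0 < 1" using two_le[OF fs_g] gpos[of "d - 1"] d0 by simp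
lemma Gd_lt1: "Gs (d - 1) < 1" using two_le[OF fs_G] Gpos[of 0] d0 by simp
lemma gd_pos: "0 < gs (d - 1)" using gpos d0 by simp
lemma Gd_pos: "0 < Gs (d - 1)" using Gpos d0 by simp
lemma g1_pos: "0 < gs 0" using gpos d0 by simp
lemma G1_pos: "0 < Gs 0" using Gpos d0 by simp


lemma sum_rm:
  assumes "i < d" shows "(\<Sum>k<d. f k) = f i + (\<Sum>k\<in>{..<d} - {i}. f k)"
  using assms by (simp add: sum.remove)

lemma prob_aS:
  assumes "0 \<le> t" "t \<le> 1" shows "prob_vec d (aS d gs t)"
proof -
  have c: "0 \<le> (1 - t) / (1 - gs 0)" using assms g1_lt1 by simp
  have "(\<Sum>k<d. aS d gs t k) = t + (\<Sum>k\<in>{..<d} - {0}. (1 - t) / (1 - gs 0) * gs k)"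
    using sum_rm[OF d0, of "aS d gs t"] by (simp add: aS_def)
  also have "(\<Sum>k\<in>{..<d} - {0}. (1 - t) / (1 - gs 0) * gs k) = (1 - t) / (1 - gs 0) * (1 - gs 0)"
  proof -
    have "(\<Sum>k\<in>{..<d} - {0}. (1 - t) / (1 - gs 0) * gs k) = (1 - t) / (1 - gs 0) * (\<Sum>k\<in>{..<d} - {0}. gs k)"
      by (rule sum_distrib_left[symmetric])
    moreover have "(\<Sum>k\<in>{..<d} - {0}. gs k) = 1 - gs 0" using sum_rm[OF d0, of gs] gsum by simp
    ultimately show ?thesis by simp
  qed
  finally have "(\<Sum>k<d. aS d gs t k) = 1" using g1_lt1 by simp
  moreover have "\<forall>i<d. 0 \<le> aS d gs t i" using assms c gpos g1_lt1 by (auto simp: aS_def less_imp_le intro!: divide_nonneg_nonneg mult_nonneg_nonneg)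
  ultimately show ?thesis using d0 by (simp add: prob_vec_def aS_def)
qed

lemma prob_bS:
  assumes "0 \<le> T" "T \<le> 1" shows "prob_vec d (bS d Gs T)"
proof -
  have dd: "d - 1 < d" using d0 by simp
  have c: "0 \<le> (1 - T) / (1 - Gs (d - 1))" using assms Gd_lt1 by simp
  have "(\<Sum>k<d. bS d Gs T k) = T + (\<Sum>k\<in>{..<d} - {d - 1}. (1 - T) / (1 - Gs (d - 1)) * Gs k)"
    using sum_rm[OF dd, of "bS d Gs T"] by (simp add: bS_def)
  also have "(\<Sum>k\<in>{..<d} - {d - 1}. (1 - T) / (1 - Gs (d - 1)) * Gs k) = (1 - T) / (1 - Gs (d - 1)) * (1 - Gs (d - 1))"
  proof -
    have "(\<Sum>k\<in>{..<d} - {(d - 1)}. (1 - T) / (1 - Gs (d - 1)) * Gs k) = (1 - T) / (1 - Gs (d - 1)) * (\<Sum>k\<in>{..<d} - {(d - 1)}. Gs k)"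
      by (rule sum_distrib_left[symmetric])
    moreover have "(\<Sum>k\<in>{..<d} - {(d - 1)}. Gs k) = 1 - Gs (d - 1)" using sum_rm[OF dd, of Gs] Gsum by simp
    ultimately show ?thesis by simp
  qed
  finally have "(\<Sum>k<d. bS d Gs T k) = 1" using Gd_lt1 by simp
  moreover have "\<forall>i<d. 0 \<le> bS d Gs T i" using assms c Gpos Gd_lt1 by (auto simp: bS_def less_imp_le intro!: divide_nonneg_nonneg mult_nonneg_nonneg)
  ultimately show ?thesis using dd by (simp add: prob_vec_def bS_def)
qed

lemma ord_a_g:
  assumes "gs 0 \<le> t" "t \<le> 1" shows "thermo_order d gs (aS d gs t) id"
proof -
  define c where "c = (1 - t) / (1 - gs 0)"
  have c1: "c \<le> 1" using assms g1_lt1 by (simp add: c_def)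
  have t1: "1 \<le> t / gs 0" using assms g1_pos by simp
  show ?thesis unfolding thermo_order_def
  proof (intro conjI allI impI)
    fix i j :: nat assume ij: "i \<le> j" "j < d"
    have gj: "0 < gs j" using gpos ij by simp
    have gi: "0 < gs i" using gpos ij by simp
    show "aS d gs t (id j) / gs (id j) \<le> aS d gs t (id i) / gs (id i)"
    proof (cases "j = 0")
      case False
      then show ?thesis using ij gj gi c1 t1 by (auto simp: aS_def c_def[symmetric])
    qed (use ij in simp)
  qed simp
qed

lemma ord_a_G:
  assumes "gs 0 \<le> t" "t \<le> 1" shows "thermo_order d Gs (aS d gs t) id"
proof -
  define c where "c = (1 - t) / (1 - gs 0)"
  have c1: "c \<le> 1" "0 \<le> c" using assms g1_lt1 by (auto simp: c_def)
  have t1: "gs 0 / Gs 0 \<le> t / Gs 0" using assms G1_pos by (simp add: divide_right_mono)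
  show ?thesis unfolding thermo_order_def
  proof (intro conjI allI impI)
    fix i j :: nat assume ij: "i \<le> j" "j < d"
    have gj: "0 < gs j" "0 < Gs j" using gpos Gpos ij by auto
    have r: "gs j / Gs j \<le> gs i / Gs i" "gs j / Gs j \<le> gs 0 / Gs 0" using ratio_g ij by auto
    show "aS d gs t (id j) / Gs (id j) \<le> aS d gs t (id i) / Gs (id i)"
    proof (cases "j = 0")
      case False
      show ?thesis
      proof (cases "i = 0")
        case True
        have "c * (gs j / Gs j) \<le> gs j / Gs j" by (rule mult_left_le_one_le) (use c1 gj in auto)
        then show ?thesis using True False ij r t1 by (simp add: aS_def c_def[symmetric])
      next
        case f2: False
        have "c * (gs j / Gs j) \<le> c * (gs i / Gs i)" by (rule mult_left_mono) (use r c1 in auto)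
        then show ?thesis using f2 False ij by (simp add: aS_def c_def[symmetric])
      qed
    qed (use ij in simp)
  qed simp
qed

lemma ord_b_G:
  assumes "Gs (d - 1) \<le> T" "T \<le> 1" shows "thermo_order d Gs (bS d Gs T) (revp d)"
proof -
  define C where "C = (1 - T) / (1 - Gs (d - 1))"
  have c1: "C \<le> 1" using assms Gd_lt1 by (simp add: C_def)
  have t1: "1 \<le> T / Gs (d - 1)" using assms Gd_pos by simp
  show ?thesis unfolding thermo_order_def
  proof (intro conjI allI impI)
    fix i j :: nat assume ij: "i \<le> j" "j < d"
    have gj: "0 < Gs (revp d j)" "0 < Gs (revp d i)" using Gpos ij by (auto simp: revp_def)
    show "bS d Gs T (revp d j) / Gs (revp d j) \<le> bS d Gs T (revp d i) / Gs (revp d i)"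
    proof (cases "i = 0")
      case True
      have c2: "(1 - T) / (1 - Gs (d - 1)) \<le> T / Gs (d - 1)" using c1 t1 unfolding C_def by linarith
      then show ?thesis using True ij gj c1 t1 by (auto simp: bS_def revp_def)
    next
      case False
      then show ?thesis using ij gj by (auto simp: bS_def C_def[symmetric] revp_def)
    qed
  qed (rule revp_perm)
qed

lemma ord_b_g:
  assumes "Gs (d - 1) \<le> T" "T \<le> 1" shows "thermo_order d gs (bS d Gs T) (revp d)"
proof -
  define C where "C = (1 - T) / (1 - Gs (d - 1))"
  have c1: "C \<le> 1" "0 \<le> C" using assms Gd_lt1 by (auto simp: C_def)
  have t1: "Gs (d - 1) / gs (d - 1) \<le> T / gs (d - 1)" using assms gd_pos by (simp add: divide_right_mono)
  show ?thesis unfolding thermo_order_def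
  proof (intro conjI allI impI)
    fix i j :: nat assume ij: "i \<le> j" "j < d"
    define a where "a = revp d i"
    define b where "b = revp d j"
    have ab: "b \<le> a" "a < d" "a = d - 1 \<longleftrightarrow> i = 0" "b = d - 1 \<longleftrightarrow> j = 0" using ij d0 by (auto simp: a_def b_def revp_def)
    have gj: "0 < gs b" "0 < Gs b" using gpos Gpos ab by auto
    have r: "Gs b / gs b \<le> Gs a / gs a" "Gs b / gs b \<le> Gs (d - 1) / gs (d - 1)" using ratio_G ab d0 by auto
    have beq: "\<And>k. k < d \<Longrightarrow> k \<noteq> d - 1 \<Longrightarrow> bS d Gs T k = C * Gs k" by (simp add: bS_def C_def)
    show "bS d Gs T (revp d j) / gs (revp d j) \<le> bS d Gs T (revp d i) / gs (revp d i)"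
      unfolding a_def[symmetric] b_def[symmetric]
    proof (cases "b = d - 1")
      case False
      show "bS d Gs T b / gs b \<le> bS d Gs T a / gs a"
      proof (cases "a = d - 1")
        case True
        have "C * (Gs b / gs b) \<le> Gs b / gs b" by (rule mult_left_le_one_le) (use c1 gj in auto)
        moreover have "bS d Gs T (d - 1) = T" by (simp add: bS_def)
        ultimately show ?thesis using True False ab r t1 beq[of b] by simp
      next
        case f2: False
        have "C * (Gs b / gs b) \<le> C * (Gs a / gs a)" by (rule mult_left_mono) (use r c1 in auto)
        then show ?thesis using f2 False ab beq[of b] beq[of a] by simp
      qed
    next
      case True
      then have "a = d - 1" using ab by linarith
      then show "bS d Gs T b / gs b \<le> bS d Gs T a / gs a" using True by simp
    qed
  qed (rule revp_perm)
qed


lemma revp0: "revp d 0 = d - 1" using d0 by (simp add: revp_def)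
lemma revp1: "revp d 1 = d - 2" using d2 by (simp add: revp_def)

abbreviation "phi t \<equiv> t * Gs (d - 1) / Gs 0"
abbreviation "kk \<equiv> (1 - gs 0) / (1 - gs (d - 1))"
abbreviation "psi T \<equiv> 1 - (1 - T) * kk"

lemma kk: "0 < kk" "kk < 1" using g1_lt1 gd_lt_g1 by auto

lemma stepG:
  assumes t: "gs 0 \<le> t" "t \<le> 1"
  shows "thermomaj d Gs (aS d gs t) (bS d Gs (phi t)) \<and> Gs (d - 1) \<le> phi t \<and> phi t \<le> 1"
proof -
  define T where "T = phi t"
  have T1: "Gs (d - 1) \<le> T" unfolding T_def using t G1_le_g1 G1_pos Gd_pos
    by (simp add: le_divide_eq mult_left_mono mult.commute)
  have "t * Gs (d - 1) \<le> 1 * Gs (d - 1)" using t Gd_pos by (intro mult_right_mono) auto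
  then have T2: "T \<le> 1" unfolding T_def using Gd_le_G1 G1_pos
    by (simp add: divide_le_eq)
  have t0: "0 \<le> t" using t g1_pos by simp
  define C where "C = (1 - T) / (1 - Gs (d - 1))"
  have dd: "d - 2 < d" "d - 2 \<noteq> d - 1" using d2 by auto
  have q1: "bS d Gs T (d - 2) = C * Gs (d - 2)" using dd by (simp add: bS_def C_def)
  have r1: "bS d Gs T (d - 2) / Gs (d - 2) = C" using q1 Gpos[OF dd(1)] by simp
  have q0: "bS d Gs T (d - 1) = T" by (simp add: bS_def)
  have T0: "0 \<le> T" using T1 Gd_pos by simp
  have "thermomaj d Gs (aS d gs t) (bS d Gs T)"
  proof (rule step_lemma[OF ord_a_G[OF t] ord_b_G[OF T1 T2] fs_G prob_aS[OF t0 t(2)] prob_bS[OF T0 T2] d2, of "Gs (d - 1)"])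
    show "0 < Gs (d - 1)" by (rule Gd_pos)
    show "Gs (d - 1) \<le> Gs (id 0)" using Gd_le_G1 by simp
    show "Gs (d - 1) < 1" by (rule Gd_lt1)
    show "bS d Gs T (revp d 0) / Gs (revp d 0) \<le> aS d gs t (id 0) / Gs (id 0)"
      unfolding revp0 q0 using Gd_pos by (simp add: aS_def T_def mult.commute)
    show "bS d Gs T (revp d 0) + bS d Gs T (revp d 1) / Gs (revp d 1) * (Gs (d - 1) - Gs (revp d 0))
          \<le> Gs (d - 1) * (aS d gs t (id 0) / Gs (id 0))"
      unfolding revp0 revp1 r1 q0 by (simp add: aS_def T_def mult.commute)
    show "bS d Gs T (revp d 0) + bS d Gs T (revp d 1) / Gs (revp d 1) * (1 - Gs (revp d 0)) \<le> 1"
      unfolding revp0 revp1 r1 q0 using Gd_lt1 by (simp add: C_def)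
  qed
  then show ?thesis using T1 T2 by (simp add: T_def)
qed

lemma stepg:
  assumes T: "Gs (d - 1) \<le> T" "T \<le> 1"
  shows "thermomaj d gs (bS d Gs T) (aS d gs (psi T)) \<and> gs 0 \<le> psi T \<and> psi T \<le> 1"
proof -
  define t where "t = psi T"
  have Tg: "gs (d - 1) \<le> T" using T gd_le_Gd by simp
  have k1: "1 - gs (d - 1) > 0" using gd_lt_g1 g1_lt1 by simp
  have "(1 - T) * kk \<le> 1 - gs 0"
  proof -
    have "(1 - T) * (1 - gs 0) \<le> (1 - gs (d - 1)) * (1 - gs 0)" using Tg g1_lt1 by (intro mult_right_mono) auto
    then show ?thesis using k1 by (simp add: divide_simps mult.commute)
  qed
  then have t1: "gs 0 \<le> t" unfolding t_def by simp
  have "0 \<le> (1 - T) * kk" using T kk by (intro mult_nonneg_nonneg) auto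
  then have t2: "t \<le> 1" unfolding t_def by linarith
  have T0: "0 \<le> T" using T Gd_pos by simp
  define c where "c = (1 - t) / (1 - gs 0)"
  have "1 - t = (1 - T) * kk" unfolding t_def by simp
  then have c_eq: "c = (1 - T) / (1 - gs (d - 1))" unfolding c_def using g1_lt1 k1 by simp
  have q1: "aS d gs t 1 / gs 1 = c" using gpos[of 1] d2 by (simp add: aS_def c_def)
  have q0: "aS d gs t 0 = t" by (simp add: aS_def)
  have p0: "bS d Gs T (d - 1) = T" by (simp add: bS_def)
  have key: "t * gs (d - 1) \<le> T * gs 0"
  proof -
    have "T * gs 0 - t * gs (d - 1) = (T - gs (d - 1)) * (gs 0 - gs (d - 1)) / (1 - gs (d - 1))"
      unfolding t_def using k1 by (simp add: field_simps)
    also have "\<dots> \<ge> 0" using Tg gd_lt_g1 k1 by simp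
    finally show ?thesis by simp
  qed
  have t0: "0 \<le> t" using t1 g1_pos by simp
  have "thermomaj d gs (bS d Gs T) (aS d gs t)"
  proof (rule step_lemma[OF ord_b_g[OF T] ord_a_g[OF t1 t2] fs_g prob_bS[OF T0 T(2)] prob_aS[OF t0 t2] d2, of "gs (d - 1)"])
    show "0 < gs (d - 1)" by (rule gd_pos)
    show "gs (d - 1) \<le> gs (revp d 0)" by (simp add: revp0)
    show "gs (d - 1) < 1" using k1 by simp
    show "aS d gs t (id 0) / gs (id 0) \<le> bS d Gs T (revp d 0) / gs (revp d 0)"
      unfolding revp0 p0 id_apply q0 using key g1_pos gd_pos by (simp add: divide_simps mult.commute)
    show "aS d gs t (id 0) + aS d gs t (id 1) / gs (id 1) * (gs (d - 1) - gs (id 0))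
          \<le> gs (d - 1) * (bS d Gs T (revp d 0) / gs (revp d 0))"
    proof -
      have a1: "c * (1 - gs 0) = 1 - t" unfolding c_def using g1_lt1 by simp
      have a2: "c * (1 - gs (d - 1)) = 1 - T" unfolding c_eq using k1 by simp
      have e1: "t + c * (gs (d - 1) - gs 0) = T" using a1 a2 by (simp add: algebra_simps)
      show ?thesis unfolding revp0 p0 id_apply q0 q1 using e1 gd_pos by simp
    qed
    show "aS d gs t (id 0) + aS d gs t (id 1) / gs (id 1) * (1 - gs (id 0)) \<le> 1"
      unfolding id_apply q0 q1 c_def using g1_lt1 by simp
  qed
  then show ?thesis using t1 t2 by (simp add: t_def)
qed


abbreviation "ff t \<equiv> psi (phi t)"
abbreviation "hh T \<equiv> phi (psi T)"

lemma aS_g1: "aS d gs (gs 0) = gs"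
  using g1_lt1 by (auto simp: aS_def gibbs_def fun_eq_iff)

lemma bS_Gd: "bS d Gs (Gs (d - 1)) = Gs"
  using Gd_lt1 d0 by (auto simp: bS_def gibbs_def fun_eq_iff)

lemma chainA:
  "aS d gs ((ff ^^ m) (gs 0)) \<in> chain_ends d gs Gs (2 * m) \<and> gs 0 \<le> (ff ^^ m) (gs 0) \<and> (ff ^^ m) (gs 0) \<le> 1"
proof (induction m)
  case 0
  then show ?case using aS_g1 g1_lt1 by simp
next
  case (Suc m)
  define t where "t = (ff ^^ m) (gs 0)"
  have IH: "aS d gs t \<in> chain_ends d gs Gs (2 * m)" "gs 0 \<le> t" "t \<le> 1" using Suc by (auto simp: t_def)
  note sG = stepG[OF IH(2,3)]
  have c1: "bS d Gs (phi t) \<in> chain_ends d gs Gs (Suc (2 * m))" using IH(1) sG by auto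
  note sg = stepg[of "phi t"]
  have c2: "aS d gs (ff t) \<in> chain_ends d gs Gs (Suc (Suc (2 * m)))" using c1 sg sG by auto
  then show ?case using sg sG by (simp add: t_def)
qed

lemma chainA_odd: "bS d Gs (phi ((ff ^^ m) (gs 0))) \<in> chain_ends d gs Gs (Suc (2 * m))"
  using chainA[of m] stepG by auto

lemma chainB:
  "bS d Gs ((hh ^^ m) (Gs (d - 1))) \<in> chain_ends d Gs gs (2 * m) \<and> Gs (d - 1) \<le> (hh ^^ m) (Gs (d - 1)) \<and> (hh ^^ m) (Gs (d - 1)) \<le> 1"
proof (induction m)
  case 0
  then show ?case using bS_Gd Gd_lt1 by simp
next
  case (Suc m)
  define T where "T = (hh ^^ m) (Gs (d - 1))"
  have IH: "bS d Gs T \<in> chain_ends d Gs gs (2 * m)" "Gs (d - 1) \<le> T" "T \<le> 1" using Suc by (auto simp: T_def)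
  note sg = stepg[OF IH(2,3)]
  have c1: "aS d gs (psi T) \<in> chain_ends d Gs gs (Suc (2 * m))" using IH(1) sg by auto
  note sG = stepG[of "psi T"]
  have c2: "bS d Gs (hh T) \<in> chain_ends d Gs gs (Suc (Suc (2 * m)))" using c1 sg sG by auto
  then show ?case using sg sG by (simp add: T_def)
qed

lemma chainB_odd: "aS d gs (psi ((hh ^^ m) (Gs (d - 1)))) \<in> chain_ends d Gs gs (Suc (2 * m))"
  using chainB[of m] stepg by auto


abbreviation "DD \<equiv> Gs 0 * (1 - gs (d - 1)) - Gs (d - 1) * (1 - gs 0)"
abbreviation "tt \<equiv> Gs 0 * (gs 0 - gs (d - 1)) / DD"
abbreviation "TT \<equiv> Gs (d - 1) * (gs 0 - gs (d - 1)) / DD"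
abbreviation "rho \<equiv> kk * (Gs (d - 1) / Gs 0)"

lemma DD_pos: "0 < DD"
proof -
  have "Gs (d - 1) * (1 - gs 0) < Gs (d - 1) * (1 - gs (d - 1))"
    using Gd_pos gd_lt_g1 by (intro mult_strict_left_mono) auto
  also have "\<dots> \<le> Gs 0 * (1 - gs (d - 1))"
    using Gd_le_G1 gd_lt_g1 g1_lt1 by (intro mult_right_mono) auto
  finally show ?thesis by simp
qed

lemma tg_eq: "tilde_gamma d gs Gs = aS d gs tt"
  by (simp add: tilde_gamma_def aS_def fun_eq_iff Let_def)

lemma tG_eq: "tilde_Gamma d gs Gs = bS d Gs TT"
  by (simp add: tilde_Gamma_def bS_def fun_eq_iff Let_def)

lemma phi_tt: "phi tt = TT"
  using G1_pos by (intro alg_phi) simp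

lemma psi_TT: "psi TT = tt"
proof -
  have k1: "1 - gs (d - 1) \<noteq> 0" using gd_lt_g1 g1_lt1 by simp
  show ?thesis using k1 DD_pos by (intro alg_psi) auto
qed

lemma psi_diff: "psi a - psi b = kk * (a - b)" by (rule alg_psi_diff)
lemma phi_diff: "phi a - phi b = Gs (d - 1) / Gs 0 * (a - b)" by (rule alg_phi_diff)

lemma ff_contr: "ff t - tt = rho * (t - tt)"
proof -
  have "ff t - tt = psi (phi t) - psi (phi tt)" using phi_tt psi_TT by simp
  also have "\<dots> = kk * (Gs (d - 1) / Gs 0 * (t - tt))" by (simp only: psi_diff phi_diff)
  finally show ?thesis by (simp only: mult.assoc)
qed

lemma hh_contr: "hh T - TT = rho * (T - TT)"
proof -
  have "hh T - TT = phi (psi T) - phi (psi TT)" using phi_tt psi_TT by simp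
  also have "\<dots> = Gs (d - 1) / Gs 0 * (kk * (T - TT))" by (simp only: psi_diff phi_diff)
  also have "\<dots> = kk * (Gs (d - 1) / Gs 0) * (T - TT)" by (simp only: mult.assoc mult.left_commute)
  finally show ?thesis .
qed

lemma ff_iter: "((\<lambda>t. ff t) ^^ m) x - tt = rho ^ m * (x - tt)"
  by (rule iter_contr) (rule ff_contr)

lemma hh_iter: "((\<lambda>t. hh t) ^^ m) x - TT = rho ^ m * (x - TT)"
  by (rule iter_contr) (rule hh_contr)

lemma rho: "0 < rho" "rho < 1"
proof -
  have "0 < Gs (d - 1) / Gs 0" using G1_pos Gd_pos by simp
  then show "0 < rho" using mult_pos_pos[OF kk(1)] by blast
  have "Gs (d - 1) / Gs 0 \<le> 1" using Gd_le_G1 G1_pos by simp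
  then have "kk * (Gs (d - 1) / Gs 0) \<le> kk * 1" using kk by (intro mult_left_mono) auto
  then show "rho < 1" using kk by linarith
qed

lemma vdist_a: "vdist d (aS d gs t) (aS d gs u) = 2 * \<bar>t - u\<bar>"
proof -
  have k1: "0 < 1 - gs 0" using g1_lt1 by simp
  have eqk: "\<bar>aS d gs t k - aS d gs u k\<bar> = \<bar>t - u\<bar> / (1 - gs 0) * gs k" if k: "k \<in> {..<d} - {0}" for k
  proof -
    have "aS d gs t k - aS d gs u k = (u - t) / (1 - gs 0) * gs k"
      using k by (simp add: aS_def algebra_simps diff_divide_distrib)
    then show ?thesis using k k1 gpos[of k] by (simp add: abs_mult abs_minus_commute)
  qed
  have "vdist d (aS d gs t) (aS d gs u) = \<bar>t - u\<bar> + (\<Sum>k\<in>{..<d} - {0}. \<bar>t - u\<bar> / (1 - gs 0) * gs k)"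
  proof -
    have S: "(\<Sum>k\<in>{..<d} - {0}. \<bar>aS d gs t k - aS d gs u k\<bar>) = (\<Sum>k\<in>{..<d} - {0}. \<bar>t - u\<bar> / (1 - gs 0) * gs k)"
      by (rule sum.cong[OF refl eqk])
    have a0: "\<bar>aS d gs t 0 - aS d gs u 0\<bar> = \<bar>t - u\<bar>" by (simp add: aS_def)
    show ?thesis unfolding vdist_def sum_rm[OF d0, of "\<lambda>k. \<bar>aS d gs t k - aS d gs u k\<bar>"] S a0 ..
  qed
  also have "(\<Sum>k\<in>{..<d} - {0}. \<bar>t - u\<bar> / (1 - gs 0) * gs k) = \<bar>t - u\<bar> / (1 - gs 0) * (1 - gs 0)"
  proof -
    have "(\<Sum>k\<in>{..<d} - {0}. \<bar>t - u\<bar> / (1 - gs 0) * gs k) = \<bar>t - u\<bar> / (1 - gs 0) * (\<Sum>k\<in>{..<d} - {0}. gs k)"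
      by (rule sum_distrib_left[symmetric])
    moreover have "(\<Sum>k\<in>{..<d} - {0}. gs k) = 1 - gs (0)" using sum_rm[OF d0, of gs] gsum by simp
    ultimately show ?thesis by simp
  qed
  finally show ?thesis using k1 by simp
qed

lemma vdist_b: "vdist d (bS d Gs t) (bS d Gs u) = 2 * \<bar>t - u\<bar>"
proof -
  have dd: "d - 1 < d" using d0 by simp
  have k1: "0 < 1 - Gs (d - 1)" using Gd_lt1 by simp
  have eqk: "\<bar>bS d Gs t k - bS d Gs u k\<bar> = \<bar>t - u\<bar> / (1 - Gs (d - 1)) * Gs k" if k: "k \<in> {..<d} - {d - 1}" for k
  proof -
    have "bS d Gs t k - bS d Gs u k = (u - t) / (1 - Gs (d - 1)) * Gs k"
      using k by (simp add: bS_def algebra_simps diff_divide_distrib)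
    then show ?thesis using k k1 Gpos[of k] by (simp add: abs_mult abs_minus_commute)
  qed
  have "vdist d (bS d Gs t) (bS d Gs u) = \<bar>t - u\<bar> + (\<Sum>k\<in>{..<d} - {d - 1}. \<bar>t - u\<bar> / (1 - Gs (d - 1)) * Gs k)"
  proof -
    have S: "(\<Sum>k\<in>{..<d} - {d - 1}. \<bar>bS d Gs t k - bS d Gs u k\<bar>) = (\<Sum>k\<in>{..<d} - {d - 1}. \<bar>t - u\<bar> / (1 - Gs (d - 1)) * Gs k)"
      by (rule sum.cong[OF refl eqk])
    have a0: "\<bar>bS d Gs t (d - 1) - bS d Gs u (d - 1)\<bar> = \<bar>t - u\<bar>" by (simp add: bS_def)
    show ?thesis unfolding vdist_def sum_rm[OF dd, of "\<lambda>k. \<bar>bS d Gs t k - bS d Gs u k\<bar>"] S a0 ..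
  qed
  also have "(\<Sum>k\<in>{..<d} - {d - 1}. \<bar>t - u\<bar> / (1 - Gs (d - 1)) * Gs k) = \<bar>t - u\<bar> / (1 - Gs (d - 1)) * (1 - Gs (d - 1))"
  proof -
    have "(\<Sum>k\<in>{..<d} - {d - 1}. \<bar>t - u\<bar> / (1 - Gs (d - 1)) * Gs k) = \<bar>t - u\<bar> / (1 - Gs (d - 1)) * (\<Sum>k\<in>{..<d} - {d - 1}. Gs k)"
      by (rule sum_distrib_left[symmetric])
    moreover have "(\<Sum>k\<in>{..<d} - {d - 1}. Gs k) = 1 - Gs (d - 1)" using sum_rm[OF dd, of Gs] Gsum by simp
    ultimately show ?thesis by simp
  qed
  finally show ?thesis using k1 by simp
qed


lemma in_FN: "p \<in> chain_ends d gs Gs n \<or> p \<in> chain_ends d Gs gs n \<Longrightarrow> p \<in> F_N d gs Gs (Suc n)"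
  unfolding F_N_def by (rule in_convex_combs) auto

lemma kk_le: "kk \<le> 1" using kk by simp
lemma GG_le: "Gs (d - 1) / Gs 0 \<le> 1" using Gd_le_G1 G1_pos by simp

lemma HA:
  defines "K \<equiv> 2 * (\<bar>gs 0 - tt\<bar> + \<bar>Gs (d - 1) - TT\<bar>)"
  shows "\<forall>n. \<exists>q\<in>F_N d gs Gs (Suc n). vdist d q (tilde_gamma d gs Gs) \<le> K * rho ^ (n div 2)"
proof
  fix n :: nat
  define m where "m = n div 2"
  have rp: "0 \<le> rho ^ m" using rho by simp
  show "\<exists>q\<in>F_N d gs Gs (Suc n). vdist d q (tilde_gamma d gs Gs) \<le> K * rho ^ (n div 2)"
  proof (cases "even n")
    case True
    then have n: "n = 2 * m" by (simp add: m_def)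
    define t where "t = ((\<lambda>t. ff t) ^^ m) (gs 0)"
    have q: "aS d gs t \<in> F_N d gs Gs (Suc n)" using chainA[of m] n by (intro in_FN) (simp add: t_def)
    have "vdist d (aS d gs t) (tilde_gamma d gs Gs) = 2 * \<bar>t - tt\<bar>" by (simp add: tg_eq vdist_a)
    also have "\<dots> = 2 * (rho ^ m * \<bar>gs 0 - tt\<bar>)" unfolding t_def ff_iter using rho by (simp add: abs_mult)
    also have "\<dots> \<le> K * rho ^ m" unfolding K_def using rp by (simp add: algebra_simps)
    finally show ?thesis using q m_def by blast
  next
    case False
    then have n: "n = Suc (2 * m)" by (simp add: m_def)
    define S where "S = ((\<lambda>t. hh t) ^^ m) (Gs (d - 1))"
    have q: "aS d gs (psi S) \<in> F_N d gs Gs (Suc n)" using chainB_odd[of m] n by (intro in_FN) (simp add: S_def)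
    have "vdist d (aS d gs (psi S)) (tilde_gamma d gs Gs) = 2 * \<bar>psi S - tt\<bar>" unfolding tg_eq vdist_a ..
    also have "\<dots> = 2 * \<bar>psi S - psi TT\<bar>" unfolding psi_TT ..
    also have "\<dots> = 2 * (kk * (rho ^ m * \<bar>Gs (d - 1) - TT\<bar>))"
      unfolding psi_diff S_def hh_iter using rho kk by (subst abs_p2) auto
    also have "\<dots> \<le> 2 * (rho ^ m * \<bar>Gs (d - 1) - TT\<bar>)"
      by (rule le2[OF kk_le mult_nonneg_nonneg[OF rp abs_ge_zero]])
    also have "\<dots> \<le> K * rho ^ m" unfolding K_def using rp by (simp add: algebra_simps)
    finally show ?thesis using q m_def by blast
  qed
qed

lemma HB:
  defines "K \<equiv> 2 * (\<bar>gs 0 - tt\<bar> + \<bar>Gs (d - 1) - TT\<bar>)"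
  shows "\<forall>n. \<exists>q\<in>F_N d gs Gs (Suc n). vdist d q (tilde_Gamma d gs Gs) \<le> K * rho ^ (n div 2)"
proof
  fix n :: nat
  define m where "m = n div 2"
  have rp: "0 \<le> rho ^ m" using rho by simp
  show "\<exists>q\<in>F_N d gs Gs (Suc n). vdist d q (tilde_Gamma d gs Gs) \<le> K * rho ^ (n div 2)"
  proof (cases "even n")
    case True
    then have n: "n = 2 * m" by (simp add: m_def)
    define S where "S = ((\<lambda>t. hh t) ^^ m) (Gs (d - 1))"
    have q: "bS d Gs S \<in> F_N d gs Gs (Suc n)" using chainB[of m] n by (intro in_FN) (simp add: S_def)
    have "vdist d (bS d Gs S) (tilde_Gamma d gs Gs) = 2 * \<bar>S - TT\<bar>" by (simp add: tG_eq vdist_b)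
    also have "\<dots> = 2 * (rho ^ m * \<bar>Gs (d - 1) - TT\<bar>)" unfolding S_def hh_iter using rho by (simp add: abs_mult)
    also have "\<dots> \<le> K * rho ^ m" unfolding K_def using rp by (simp add: algebra_simps)
    finally show ?thesis using q m_def by blast
  next
    case False
    then have n: "n = Suc (2 * m)" by (simp add: m_def)
    define t where "t = ((\<lambda>t. ff t) ^^ m) (gs 0)"
    have q: "bS d Gs (phi t) \<in> F_N d gs Gs (Suc n)" using chainA_odd[of m] n by (intro in_FN) (simp add: t_def)
    have "vdist d (bS d Gs (phi t)) (tilde_Gamma d gs Gs) = 2 * \<bar>phi t - TT\<bar>" unfolding tG_eq vdist_b ..
    also have "\<dots> = 2 * \<bar>phi t - phi tt\<bar>" unfolding phi_tt ..
    also have "\<dots> = 2 * (Gs (d - 1) / Gs 0 * (rho ^ m * \<bar>gs 0 - tt\<bar>))"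
      unfolding phi_diff t_def ff_iter using rho G1_pos Gd_pos by (subst abs_p2) auto
    also have "\<dots> \<le> 2 * (rho ^ m * \<bar>gs 0 - tt\<bar>)"
      by (rule le2[OF GG_le mult_nonneg_nonneg[OF rp abs_ge_zero]])
    also have "\<dots> \<le> K * rho ^ m" unfolding K_def using rp by (simp add: algebra_simps)
    finally show ?thesis using q m_def by blast
  qed
qed

lemma main:
  "tilde_gamma d gs Gs \<in> F_AB d gs Gs \<and> tilde_Gamma d gs Gs \<in> F_AB d gs Gs \<and>
    (\<exists>C r. 0 < r \<and> r < 1 \<and> (\<forall>N\<ge>1. \<exists>q\<in>F_N d gs Gs N.
        vdist d q (tilde_gamma d gs Gs) \<le> C * r ^ N)) \<and>
    (\<exists>C r. 0 < r \<and> r < 1 \<and> (\<forall>N\<ge>1. \<exists>q\<in>F_N d gs Gs N.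
        vdist d q (tilde_Gamma d gs Gs) \<le> C * r ^ N))"
proof -
  define K where "K = 2 * (\<bar>gs 0 - tt\<bar> + \<bar>Gs (d - 1) - TT\<bar>)"
  have K: "0 \<le> K" by (simp add: K_def)
  have EA: "\<exists>C r. 0 < r \<and> r < 1 \<and> (\<forall>N\<ge>1. \<exists>q\<in>F_N d gs Gs N. vdist d q (tilde_gamma d gs Gs) \<le> C * r ^ N)"
    by (rule expo[OF rho K]) (use HA in \<open>simp add: K_def\<close>)
  have EB: "\<exists>C r. 0 < r \<and> r < 1 \<and> (\<forall>N\<ge>1. \<exists>q\<in>F_N d gs Gs N. vdist d q (tilde_Gamma d gs Gs) \<le> C * r ^ N)"
    by (rule expo[OF rho K]) (use HB in \<open>simp add: K_def\<close>)
  have CA: "\<forall>\<epsilon>>0. \<exists>N\<ge>1. \<exists>q\<in>F_N d gs Gs N. vdist d (tilde_gamma d gs Gs) q < \<epsilon>"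
    using closure_from_expo[OF EA] by (simp add: vdist_sym)
  have CB: "\<forall>\<epsilon>>0. \<exists>N\<ge>1. \<exists>q\<in>F_N d gs Gs N. vdist d (tilde_Gamma d gs Gs) q < \<epsilon>"
    using closure_from_expo[OF EB] by (simp add: vdist_sym)
  have ZA: "\<forall>i\<ge>d. tilde_gamma d gs Gs i = 0" using d2 by (auto simp: tilde_gamma_def Let_def)
  have ZB: "\<forall>i\<ge>d. tilde_Gamma d gs Gs i = 0" using d2 by (auto simp: tilde_Gamma_def Let_def)
  show ?thesis using EA EB CA CB ZA ZB unfolding F_AB_def by blast
qed

end

theorem proposition4:
  fixes d :: nat and E :: "nat \<Rightarrow> real" and \<alpha> \<beta> :: real
  assumes "d \<ge> 2"
    and "\<forall>i j. i \<le> j \<longrightarrow> j < d \<longrightarrow> E i \<le> E j"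
    and "E 0 < E (d - 1)"
    and "\<alpha> > \<beta>" and "\<beta> \<ge> 0"
  defines "gs \<equiv> gibbs d E \<alpha>" and "Gs \<equiv> gibbs d E \<beta>"
  shows "tilde_gamma d gs Gs \<in> F_AB d gs Gs \<and> tilde_Gamma d gs Gs \<in> F_AB d gs Gs \<and>
    (\<exists>C r. 0 < r \<and> r < 1 \<and> (\<forall>N\<ge>1. \<exists>q\<in>F_N d gs Gs N.
        vdist d q (tilde_gamma d gs Gs) \<le> C * r ^ N)) \<and>
    (\<exists>C r. 0 < r \<and> r < 1 \<and> (\<forall>N\<ge>1. \<exists>q\<in>F_N d gs Gs N.
        vdist d q (tilde_Gamma d gs Gs) \<le> C * r ^ N))"
proof -
  interpret P4 d E \<alpha> \<beta> using assms(1-5) by unfold_locales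
  show ?thesis unfolding gs_def Gs_def by (rule main)
qed

end
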